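(* Let $d\ge1$, $P\subseteq\mathbb R\times[d]$ and $k\in[d]$. The fractional Helly number of $(P,\mathcal C_{\equiv}(P))$ with respect to $k$-intersecting satisfies $h_{fk}(P,\mathcal C_{\equiv}(P))\le 2d-k+1$.
   Context: $[d]=\{1,\dots,d\}$. A (separated) $d$-interval is a set $I=\bigcup_{i\in[d]}\{(x,i): x\in I^{(i)}\}\subseteq\mathbb R\times[d]$ with each $I^{(i)}\subseteq\mathbb R$ convex (possibly empty); points $(x,i)$ lie in the $i$-th level. For $P\subseteq\mathbb R\times[d]$, $\mathcal C_{\equiv}(P)=\{I\cap P: I \text{ a } d\text{-interval}\}$. A collection of sets of $\mathcal C_{\equiv}(P)$ $k$-intersects (is $k$-intersecting) if its intersection contains at least $k$ points of $P$ lying in $k$ distinct levels. $h_{fk}(P,\mathcal C_{\equiv}(P))$ is the minimal integer $m$ such that there is a function $\beta:(0,1)\to(0,1)$ with the property: every finite $\mathcal F\subseteq\mathcal C_{\equiv}(P)$ having at least $\alpha\binom{|\mathcal F|}{m}$ $k$-intersecting $m$-element subfamilies contains a $k$-intersecting subfamily of size at least $\beta(\alpha)|\mathcal F|$. *)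

theory Defs
  imports "HOL-Analysis.Analysis"
begin

text \<open>Points of \<open>\<real> \<times> [d]\<close> are pairs \<open>(x, i)\<close> with \<open>i \<in> {1..d}\<close> the level.\<close>

definition d_interval :: "nat \<Rightarrow> (real \<times> nat) set \<Rightarrow> bool" where
  "d_interval d I \<longleftrightarrow>
     (\<exists>J :: nat \<Rightarrow> real set. (\<forall>i. convex (J i)) \<and> I = {(x, i). i \<in> {1..d} \<and> x \<in> J i})"

definition C_equiv :: "nat \<Rightarrow> (real \<times> nat) set \<Rightarrow> (real \<times> nat) set set" where
  "C_equiv d P = {I \<inter> P | I. d_interval d I}"

definition k_intersecting :: "(real \<times> nat) set \<Rightarrow> nat \<Rightarrow> (real \<times> nat) set set \<Rightarrow> bool" where
  "k_intersecting P k G \<longleftrightarrow> card (snd ` (P \<inter> \<Inter>G)) \<ge> k"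

definition frac_helly_prop ::
  "(real \<times> nat) set \<Rightarrow> (real \<times> nat) set set \<Rightarrow> nat \<Rightarrow> nat \<Rightarrow> bool" where
  "frac_helly_prop P C k m \<longleftrightarrow>
     (\<exists>\<beta> :: real \<Rightarrow> real. (\<forall>\<alpha>. 0 < \<alpha> \<and> \<alpha> < 1 \<longrightarrow> 0 < \<beta> \<alpha> \<and> \<beta> \<alpha> < 1) \<and>
       (\<forall>F \<alpha>. finite F \<and> F \<subseteq> C \<and> card F \<ge> m \<and> 0 < \<alpha> \<and> \<alpha> < 1 \<and>
          real (card {G. G \<subseteq> F \<and> card G = m \<and> k_intersecting P k G}) \<ge> \<alpha> * real (card F choose m)
          \<longrightarrow> (\<exists>G \<subseteq> F. k_intersecting P k G \<and> real (card G) \<ge> \<beta> \<alpha> * real (card F))))"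

end

theory Submission
  imports Defs
begin

definition Cw :: "(real \<times> nat) set \<Rightarrow> (real \<times> nat) set set \<Rightarrow> nat \<Rightarrow> (real \<times> nat) set \<Rightarrow> bool" where
  "Cw P S i A \<longleftrightarrow> (\<exists>q. (q,i) \<in> P \<inter> \<Inter>S \<and> (\<forall>p. (p,i) \<in> P \<inter> \<Inter>S \<and> p \<le> q \<longrightarrow> (p,i) \<in> A))"

lemma pconv:
  assumes "B \<in> C_equiv d P" "(a,i)\<in>B" "(c,i)\<in>B" "(b,i)\<in>P" "a\<le>b" "b\<le>c"
  shows "(b,i)\<in>B"
proof -
  obtain I where I: "B = I \<inter> P" "d_interval d I" using assms(1) unfolding C_equiv_def by auto
  then obtain J where J: "\<forall>i. convex (J i)" "I = {(x, i). i \<in> {1..d} \<and> x \<in> J i}"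
    unfolding d_interval_def by auto
  have "a \<in> J i" "c \<in> J i" "i \<in> {1..d}" using assms(2,3) I J by auto
  moreover have "is_interval (J i)" using J(1) is_interval_convex_1 by blast
  ultimately have "b \<in> J i" using mem_is_interval_1_I assms(5,6) by blast
  then show ?thesis using I J assms(4) \<open>i \<in> {1..d}\<close> by auto
qed

lemma crit_unique:
  assumes "G \<subseteq> C_equiv d P" "(q,i) \<in> P \<inter> \<Inter>G" "A\<in>G" "B\<in>G"
    "\<not>Cw P (G-{A}) i A" "\<not>Cw P (G-{B}) i B"
  shows "A = B"
proof (rule ccontr)
  assume ne: "A \<noteq> B"
  have qA: "(q,i) \<in> P \<inter> \<Inter>(G-{A})" "(q,i) \<in> P \<inter> \<Inter>(G-{B})" using assms(2) by auto
  obtain pa where pa: "(pa,i) \<in> P \<inter> \<Inter>(G-{A})" "pa \<le> q" "(pa,i) \<notin> A"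
    using assms(5) qA(1) unfolding Cw_def by blast
  obtain pb where pb: "(pb,i) \<in> P \<inter> \<Inter>(G-{B})" "pb \<le> q" "(pb,i) \<notin> B"
    using assms(6) qA(2) unfolding Cw_def by blast
  have "(pa,i) \<in> B" using pa(1) ne assms(4) by auto
  have "(pb,i) \<in> A" using pb(1) ne assms(3) by auto
  have qinA: "(q,i) \<in> A" "(q,i) \<in> B" using assms(2,3,4) by auto
  show False
  proof (cases "pa \<le> pb")
    case True
    then have "(pb,i) \<in> B" using pconv[of B d P pa i q pb] assms(1,4) \<open>(pa,i) \<in> B\<close> qinA pb by auto
    then show ?thesis using pb by auto
  next
    case False
    then have "(pa,i) \<in> A" using pconv[of A d P pb i q pa] assms(1,3) \<open>(pb,i) \<in> A\<close> qinA pa by auto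
    then show ?thesis using pa by auto
  qed
qed

lemma exists_good_A:
  assumes "G \<subseteq> C_equiv d P" "finite G" "card G = Suc k" "k_intersecting P k G"
    "P \<subseteq> UNIV \<times> {1..d}"
  shows "\<exists>T A. T \<subseteq> {1..d} \<and> card T = k \<and> A \<in> G \<and> (\<forall>i\<in>T. Cw P (G-{A}) i A)"
proof -
  define L where "L = snd ` (P \<inter> \<Inter>G)"
  have Ld: "L \<subseteq> {1..d}" using assms(5) unfolding L_def by auto
  then have "finite L" using finite_subset by blast
  have "card L \<ge> k" using assms(4) unfolding k_intersecting_def L_def by auto
  then obtain T where T: "T \<subseteq> L" "card T = k" using obtain_subset_with_card_n by metis
  define Crit where "Crit = (\<Union>i\<in>T. {A\<in>G. \<not>Cw P (G-{A}) i A})"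
  have fT: "finite T" using T \<open>finite L\<close> finite_subset by blast
  have each: "card {A\<in>G. \<not>Cw P (G-{A}) i A} \<le> 1" if "i \<in> T" for i
  proof -
    from that T(1) obtain q where q: "(q,i) \<in> P \<inter> \<Inter>G" unfolding L_def by force
    have f: "finite {A\<in>G. \<not>Cw P (G-{A}) i A}" using assms(2) by simp
    have "card {A\<in>G. \<not>Cw P (G-{A}) i A} \<le> Suc 0"
      using card_le_Suc0_iff_eq[OF f] crit_unique[OF assms(1) q] by auto
    then show ?thesis by simp
  qed
  have "card Crit \<le> (\<Sum>i\<in>T. card {A\<in>G. \<not>Cw P (G-{A}) i A})"
    unfolding Crit_def by (rule card_UN_le[OF fT])
  also have "\<dots> \<le> (\<Sum>i\<in>T. 1)" by (rule sum_mono) (use each in auto)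
  finally have "card Crit \<le> k" using T by simp
  then have lt: "card Crit < card G" using assms(3) by simp
  have "Crit \<subseteq> G" unfolding Crit_def by auto
  then have "finite Crit" using assms(2) finite_subset by blast
  then have "\<not> G \<subseteq> Crit" using lt by (meson card_mono not_le)
  then obtain A where "A \<in> G" "A \<notin> Crit" by blast
  then show ?thesis using T Ld unfolding Crit_def by (intro exI[of _ T] exI[of _ A]) auto
qed

lemma common:
  assumes "finite As" "As \<noteq> {}" "\<forall>A\<in>As. Cw P S i A"
  shows "\<exists>q. (q,i) \<in> P \<inter> \<Inter>(S \<union> As)"
proof -
  define qA where "qA A = (SOME q. (q,i) \<in> P \<inter> \<Inter>S \<and> (\<forall>p. (p,i) \<in> P \<inter> \<Inter>S \<and> p \<le> q \<longrightarrow> (p,i) \<in> A))" for A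
  have qA: "(qA A,i) \<in> P \<inter> \<Inter>S \<and> (\<forall>p. (p,i) \<in> P \<inter> \<Inter>S \<and> p \<le> qA A \<longrightarrow> (p,i) \<in> A)" if "A \<in> As" for A
    unfolding qA_def by (rule someI_ex) (use assms(3) that in \<open>auto simp: Cw_def\<close>)
  define q0 where "q0 = Min (qA ` As)"
  have "q0 \<in> qA ` As" unfolding q0_def using assms by (intro Min_in) auto
  then have q0S: "(q0,i) \<in> P \<inter> \<Inter>S" using qA by auto
  have "(q0,i) \<in> A" if "A \<in> As" for A
  proof -
    have "q0 \<le> qA A" unfolding q0_def using assms(1) that by auto
    then show ?thesis using qA[OF that] q0S by blast
  qed
  then show ?thesis using q0S by blast
qed

theorem theorem8:
  fixes d k :: nat and P :: "(real \<times> nat) set"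
  assumes "d \<ge> 1"
    and "P \<subseteq> UNIV \<times> {1..d}"
    and "k \<in> {1..d}"
  shows "\<exists>m. 1 \<le> m \<and> m \<le> 2 * d - k + 1 \<and> frac_helly_prop P (C_equiv d P) k m"
proof -
  have kd: "1 \<le> k" "k \<le> d" using assms(3) by auto
  have "frac_helly_prop P (C_equiv d P) k (Suc k)"
    unfolding frac_helly_prop_def
  proof (intro exI[of _ "\<lambda>\<alpha>. \<alpha> / (real (Suc k) ^ 2 * 2 ^ d)"] conjI allI impI)
    fix \<alpha> :: real assume "0 < \<alpha> \<and> \<alpha> < 1"
    moreover have "(1::real) \<le> real (Suc k) ^ 2 * 2 ^ d"
    proof -
      have "(1::real) \<le> real (Suc k) ^ 2" by simp
      moreover have "(1::real) \<le> 2 ^ d" by simp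
      ultimately show ?thesis using mult_mono[of 1 "real (Suc k) ^ 2" 1 "2 ^ d"] by simp
    qed
    ultimately show "0 < \<alpha> / (real (Suc k) ^ 2 * 2 ^ d)" "\<alpha> / (real (Suc k) ^ 2 * 2 ^ d) < 1"
      by (auto simp: divide_less_eq)
  next
    fix F \<alpha>
    assume H: "finite F \<and> F \<subseteq> C_equiv d P \<and> Suc k \<le> card F \<and> 0 < \<alpha> \<and> \<alpha> < 1 \<and>
          \<alpha> * real (card F choose Suc k) \<le> real (card {G. G \<subseteq> F \<and> card G = Suc k \<and> k_intersecting P k G})"
    define n where "n = card F"
    define Good where "Good = {G. G \<subseteq> F \<and> card G = Suc k \<and> k_intersecting P k G}"
    define Keys where "Keys = {S. S \<subseteq> F \<and> card S = k} \<times> Pow {1..d}"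
    define As where "As = (\<lambda>x. {A \<in> F - fst x. card (snd x) = k \<and> (\<forall>i\<in>snd x. Cw P (fst x) i A)})"
    have fF: "finite F" and FC: "F \<subseteq> C_equiv d P" and nk: "Suc k \<le> n" and a0: "0 < \<alpha>"
      and goodc: "\<alpha> * real (n choose Suc k) \<le> real (card Good)"
      using H unfolding n_def Good_def by auto
    have fKeys: "finite Keys" unfolding Keys_def using fF by auto
    have fAs: "finite (As x)" for x unfolding As_def using fF by auto
    have cKeys: "card Keys = (n choose k) * 2 ^ d"
      unfolding Keys_def n_def using fF by (simp add: card_cartesian_product n_subsets card_Pow)
    have ex: "\<exists>y. y \<in> Sigma Keys As \<and> G = insert (snd y) (fst (fst y))" if "G \<in> Good" for G
    proof -
      have G: "G \<subseteq> F" "card G = Suc k" "k_intersecting P k G" using that unfolding Good_def by auto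
      have fG: "finite G" using G(1) fF finite_subset by blast
      obtain T A where TA: "T \<subseteq> {1..d}" "card T = k" "A \<in> G" "\<forall>i\<in>T. Cw P (G-{A}) i A"
        using exists_good_A[OF _ fG G(2) G(3) assms(2)] G(1) FC by blast
      have "card (G - {A}) = k" using G(2) TA(3) fG by simp
      then have "((G-{A},T),A) \<in> Sigma Keys As" unfolding Keys_def As_def using TA G(1) by auto
      moreover have "G = insert A (G-{A})" using TA(3) by auto
      ultimately show ?thesis by (intro exI[of _ "((G-{A},T),A)"]) auto
    qed
    define g where "g G = (SOME y. y \<in> Sigma Keys As \<and> G = insert (snd y) (fst (fst y)))" for G
    have g: "g G \<in> Sigma Keys As \<and> G = insert (snd (g G)) (fst (fst (g G)))" if "G \<in> Good" for G
      unfolding g_def by (rule someI_ex) (use ex[OF that] in auto)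
    have inj: "inj_on g Good"
      by (rule inj_onI) (metis g)
    have fS: "finite (Sigma Keys As)" using fKeys fAs by auto
    have "card Good \<le> card (Sigma Keys As)"
    proof (rule card_inj_on_le[OF inj _ fS], rule image_subsetI)
      fix G assume "G \<in> Good" then show "g G \<in> Sigma Keys As" using g by blast
    qed
    also have "\<dots> = (\<Sum>x\<in>Keys. card (As x))" by (rule card_SigmaI[OF fKeys]) (use fAs in blast)
    finally have goodle: "real (card Good) \<le> (\<Sum>x\<in>Keys. real (card (As x)))"
      by (metis of_nat_le_iff of_nat_sum)
    have Cpos: "0 < real (n choose Suc k)" using nk by simp
    have "Good \<noteq> {}" using goodc Cpos a0
      by (metis card.empty mult_pos_pos not_le of_nat_0)
    then have "Keys \<noteq> {}" using g by blast
    then have Kpos: "0 < real (card Keys)" using fKeys by (simp add: card_gt_0_iff)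
    have "\<exists>x\<in>Keys. \<alpha> * real (n choose Suc k) \<le> real (card (As x)) * real (card Keys)"
    proof (rule ccontr)
      assume "\<not> ?thesis"
      then have "\<forall>x\<in>Keys. real (card (As x)) * real (card Keys) < \<alpha> * real (n choose Suc k)"
        by auto
      then have "(\<Sum>x\<in>Keys. real (card (As x)) * real (card Keys)) < (\<Sum>x\<in>Keys. \<alpha> * real (n choose Suc k))"
        using \<open>Keys \<noteq> {}\<close> fKeys by (intro sum_strict_mono) auto
      then have "(\<Sum>x\<in>Keys. real (card (As x))) * real (card Keys) < real (card Keys) * (\<alpha> * real (n choose Suc k))"
        by (simp add: sum_distrib_right)
      then have "(\<Sum>x\<in>Keys. real (card (As x))) < \<alpha> * real (n choose Suc k)"
        using Kpos by (simp add: mult.commute)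
      then show False using goodle goodc by linarith
    qed
    then obtain x where xK: "x \<in> Keys" and xb: "\<alpha> * real (n choose Suc k) \<le> real (card (As x)) * real (card Keys)"
      by blast
    have h1: "Suc k * (n choose Suc k) = (n - k) * (n choose k)"
      by (simp only: binomial_absorption binomial_absorb_comp)
    have h2: "n \<le> Suc k * (n - k)"
    proof -
      have a: "1 \<le> n - k" using nk by simp
      have b: "k \<le> k * (n - k)" using mult_le_mono2[OF a, of k] by simp
      have c: "Suc k * (n - k) = (n - k) + k * (n - k)" by simp
      show ?thesis using b c nk by linarith
    qed
    have h3: "n * (n choose k) \<le> Suc k * Suc k * (n choose Suc k)"
    proof -
      have "n * (n choose k) \<le> Suc k * (n - k) * (n choose k)" using mult_le_mono1[OF h2] by blast
      also have "\<dots> = Suc k * ((n - k) * (n choose k))" by (simp only: mult.assoc)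
      also have "\<dots> = Suc k * (Suc k * (n choose Suc k))" by (simp only: h1)
      also have "\<dots> = Suc k * Suc k * (n choose Suc k)" by (simp only: mult.assoc)
      finally show ?thesis .
    qed
    then have h4: "real n * real (n choose k) \<le> real (Suc k) ^ 2 * real (n choose Suc k)"
      by (metis of_nat_le_iff of_nat_mult power2_eq_square)
    have "\<alpha> / (real (Suc k) ^ 2 * 2 ^ d) * real n * real (card Keys)
        = \<alpha> * (real n * real (n choose k)) / real (Suc k) ^ 2"
      using cKeys by (simp add: field_simps)
    also have "\<dots> \<le> \<alpha> * (real (Suc k) ^ 2 * real (n choose Suc k)) / real (Suc k) ^ 2"
      using h4 a0 by (intro divide_right_mono mult_left_mono) auto
    also have "\<dots> = \<alpha> * real (n choose Suc k)" by simp
    finally have "\<alpha> / (real (Suc k) ^ 2 * 2 ^ d) * real n * real (card Keys) \<le> real (card (As x)) * real (card Keys)"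
      using xb by linarith
    then have cAs: "\<alpha> / (real (Suc k) ^ 2 * 2 ^ d) * real n \<le> real (card (As x))"
      using mult_right_le_imp_le[OF _ Kpos] by blast
    have "0 < \<alpha> / (real (Suc k) ^ 2 * 2 ^ d) * real n" using a0 nk by simp
    then have Ane: "As x \<noteq> {}" using cAs by auto
    define G' where "G' = fst x \<union> As x"
    have G'F: "G' \<subseteq> F" unfolding G'_def As_def using xK unfolding Keys_def by auto
    have fG': "finite G'" using G'F fF finite_subset by blast
    have Tk: "card (snd x) = k" using Ane unfolding As_def by auto
    have Td: "snd x \<subseteq> snd ` (P \<inter> \<Inter>G')"
    proof
      fix i assume i: "i \<in> snd x"
      have "\<forall>A\<in>As x. Cw P (fst x) i A" using i unfolding As_def by auto
      then obtain q where q: "(q,i) \<in> P \<inter> \<Inter>(fst x \<union> As x)" using common[OF fAs Ane] by blast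
      have "i = snd (q,i)" by simp
      moreover have "(q,i) \<in> P \<inter> \<Inter>G'" using q unfolding G'_def .
      ultimately show "i \<in> snd ` (P \<inter> \<Inter>G')" by (rule image_eqI)
    qed
    have "finite (snd ` (P \<inter> \<Inter>G'))"
      by (rule finite_subset[of _ "{1..d}"]) (use assms(2) in auto)
    then have "k_intersecting P k G'" unfolding k_intersecting_def using card_mono[OF _ Td] Tk by auto
    moreover have "card (As x) \<le> card G'" unfolding G'_def using fG' G'_def by (intro card_mono) auto
    ultimately show "\<exists>G\<subseteq>F. k_intersecting P k G \<and> \<alpha> / (real (Suc k) ^ 2 * 2 ^ d) * real (card F) \<le> real (card G)"
      using G'F cAs n_def by (intro exI[of _ G']) auto
  qed
  moreover have "Suc k \<le> 2 * d - k + 1" using kd by simp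
  ultimately show ?thesis by (intro exI[of _ "Suc k"]) auto
qed

end
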